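(* Let $P,T:\mathbb{Z}\to\mathrm{GL}(2,\mathbb{R})$ be cohomologous via a conjugacy sequence $Q:\mathbb{Z}\to\mathrm{GL}(2,\mathbb{R})$, i.e. $P(i)=Q(i+1)T(i)Q(i)^{-1}$ for all $i\in\mathbb{Z}$. Assume there exist constants $C_1,C_2$ with $C_1>\sigma_1(Q(i))\ge\sigma_2(Q(i))>C_2>0$ for all $i\in\mathbb{Z}$, where $\sigma_1(Q(i))\ge\sigma_2(Q(i))$ are the singular values of $Q(i)$. Then $P$ admits a dominated splitting if and only if $T$ admits a dominated splitting.
   Context: For a cocycle $A:\mathbb{Z}\to\mathrm{GL}(2,\mathbb{R})$ define $A_n(i)=A(i+n-1)\cdots A(i)$ for $n\ge1$. $\mathbb{RP}^1$ is the space of one-dimensional subspaces of $\mathbb{R}^2$ with the natural $\mathrm{GL}(2,\mathbb{R})$-action and metric $d(\bar u,\bar v)=\sqrt{1-(\langle u,v\rangle/(\|u\|\|v\|))^2}$; norms are Euclidean / operator norms. A cocycle $A:\mathbb{Z}\to\mathrm{GL}(2,\mathbb{R})$ admits a dominated splitting if $\sup_i\|A(i)\|<\infty$ and there exist maps $s,u:\mathbb{Z}\to\mathbb{RP}^1$ with: (DS1) $A(i)u(i)=u(i+1)$, $A(i)s(i)=s(i+1)$ for all $i$; (DS2) there exist $N\in\mathbb{N}$, $\eta>1$ with $\|A_N(i)\vec u\|>\eta\|A_N(i)\vec s\|$ for all $i$ and all unit vectors $\vec u\in u(i)$, $\vec s\in s(i)$; (DS3) there is $\delta>0$ with $d(u(i),s(i))>\delta$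 for all $i$; (DS4) for that $N$, $\inf_{i\in\mathbb{Z}}\|A_N(i)\|>0$. *)

theory Defs
  imports "HOL-Analysis.Analysis"
begin

type_synonym mat2 = "real^2^2"

definition opnorm :: "mat2 \<Rightarrow> real" where
  "opnorm A = onorm (\<lambda>v. A *v v)"

definition GL2_cocycle :: "(int \<Rightarrow> mat2) \<Rightarrow> bool" where
  "GL2_cocycle A \<longleftrightarrow> (\<forall>i. invertible (A i))"

text \<open>Products: cprod A n i = A(i+n-1) ... A(i); cprod A 0 i = identity.\<close>
fun cprod :: "(int \<Rightarrow> mat2) \<Rightarrow> nat \<Rightarrow> int \<Rightarrow> mat2" where
  "cprod A 0 i = mat 1"
| "cprod A (Suc n) i = A (i + int n) ** cprod A n i"

text \<open>Points of RP^1: one-dimensional subspaces of R^2.\<close>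
definition is_line :: "(real^2) set \<Rightarrow> bool" where
  "is_line L \<longleftrightarrow> subspace L \<and> dim L = 1"

definition line_act :: "mat2 \<Rightarrow> (real^2) set \<Rightarrow> (real^2) set" where
  "line_act A L = (\<lambda>v. A *v v) ` L"

text \<open>Metric on RP^1 (independent of the choice of nonzero representatives).\<close>
definition rp_dist :: "(real^2) set \<Rightarrow> (real^2) set \<Rightarrow> real" where
  "rp_dist L M = (let u = (SOME u. u \<in> L \<and> u \<noteq> 0); v = (SOME v. v \<in> M \<and> v \<noteq> 0)
     in sqrt (1 - ((u \<bullet> v) / (norm u * norm v))\<^sup>2))"

definition dominated_splitting :: "(int \<Rightarrow> mat2) \<Rightarrow> bool" where
  "dominated_splitting A \<longleftrightarrow>
     (\<exists>M. \<forall>i. opnorm (A i) \<le> M) \<and>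
     (\<exists>s u :: int \<Rightarrow> (real^2) set.
        (\<forall>i. is_line (s i) \<and> is_line (u i)) \<and>
        (\<forall>i. line_act (A i) (u i) = u (i + 1) \<and> line_act (A i) (s i) = s (i + 1)) \<and>
        (\<exists>N::nat. N \<ge> 1 \<and>
           (\<exists>\<eta>>1. \<forall>i. \<forall>uv \<in> u i. \<forall>sv \<in> s i. norm uv = 1 \<longrightarrow> norm sv = 1 \<longrightarrow>
                norm (cprod A N i *v uv) > \<eta> * norm (cprod A N i *v sv)) \<and>
           (\<exists>\<delta>>0. \<forall>i. rp_dist (u i) (s i) > \<delta>) \<and>
           (INF i. opnorm (cprod A N i)) > 0))"

definition sing_eigs :: "mat2 \<Rightarrow> real set" where
  "sing_eigs Q = {e. \<exists>v. v \<noteq> 0 \<and> (transpose Q ** Q) *v v = e *\<^sub>R v}"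

definition sigma1 :: "mat2 \<Rightarrow> real" where
  "sigma1 Q = sqrt (Max (sing_eigs Q))"

definition sigma2 :: "mat2 \<Rightarrow> real" where
  "sigma2 Q = sqrt (Min (sing_eigs Q))"

end

theory Submission
  imports Defs
begin

definition det2 :: "real^2 \<Rightarrow> real^2 \<Rightarrow> real" where
  "det2 x y = x$1 * y$2 - x$2 * y$1"

lemma norm2_sq: "(norm (x::real^2))\<^sup>2 = (x$1)\<^sup>2 + (x$2)\<^sup>2"
  by (simp add: norm_vec_def L2_set_def sum_2)

lemma inner2: "(x::real^2) \<bullet> y = x$1 * y$1 + x$2 * y$2"
  by (simp add: inner_vec_def sum_2)

lemma mv2: "((A::real^2^2) *v x)$1 = A$1$1 * x$1 + A$1$2 * x$2"
  "((A::real^2^2) *v x)$2 = A$2$1 * x$1 + A$2$2 * x$2"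
  by (simp_all add: matrix_vector_mult_def sum_2)

lemma vec2_eq: "(x::real^2) = y \<longleftrightarrow> x$1 = y$1 \<and> x$2 = y$2"
  by (simp add: vec_eq_iff forall_2)

lemma lagrange: "((x::real^2) \<bullet> y)\<^sup>2 + (det2 x y)\<^sup>2 = (norm x)\<^sup>2 * (norm y)\<^sup>2"
  unfolding norm2_sq inner2 det2_def by (simp add: power2_eq_square algebra_simps)

lemma det2_le: "\<bar>det2 x y\<bar> \<le> norm x * norm y"
proof -
  have "(det2 x y)\<^sup>2 \<le> (norm x * norm y)\<^sup>2" using lagrange[of x y]
    using lagrange[of x y] zero_le_power2[of "x \<bullet> y"] unfolding power_mult_distrib by linarith
  then have "sqrt ((det2 x y)\<^sup>2) \<le> sqrt ((norm x * norm y)\<^sup>2)" by (rule real_sqrt_le_mono)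
  then show ?thesis by simp
qed

lemma sine_formula:
  assumes "x \<noteq> 0" "y \<noteq> 0"
  shows "sqrt (1 - ((x \<bullet> y) / (norm x * norm y))\<^sup>2) = \<bar>det2 x y\<bar> / (norm x * norm y)"
proof -
  define a where "a = x \<bullet> y"
  define b where "b = norm x * norm y"
  define d where "d = det2 x y"
  have p: "b > 0" using assms by (simp add: b_def)
  have b2: "b\<^sup>2 = a\<^sup>2 + d\<^sup>2" using lagrange[of x y] by (simp add: a_def b_def d_def power_mult_distrib)
  have hb: "b\<^sup>2 \<noteq> 0" using p by simp
  have "1 - (a/b)\<^sup>2 = (b\<^sup>2 - a\<^sup>2)/b\<^sup>2" using hb by (simp add: power_divide diff_divide_distrib)
  also have "\<dots> = d\<^sup>2/b\<^sup>2" using b2 by simp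
  also have "\<dots> = (d/b)\<^sup>2" by (simp add: power_divide)
  finally have "sqrt (1 - (a/b)\<^sup>2) = \<bar>d/b\<bar>" by simp
  then show ?thesis using p by (simp add: a_def b_def d_def)
qed

lemma det2_scale: "det2 (a *\<^sub>R x) (b *\<^sub>R y) = a * b * det2 x y"
  by (simp add: det2_def algebra_simps)

lemma det2_zero_mult: assumes "det2 x u = 0" "x \<noteq> 0" shows "\<exists>t. u = t *\<^sub>R x"
proof (cases "x$1 = 0")
  case True
  then have nz: "x$2 \<noteq> 0" using assms(2) by (simp add: vec2_eq)
  have e: "x$1 * u$2 = x$2 * u$1" using assms(1) by (simp add: det2_def)
  have "u$1 = (u$2 / x$2) * x$1" using True e nz by simp
  moreover have "u$2 = (u$2 / x$2) * x$2" using nz by simp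
  ultimately show ?thesis by (intro exI[of _ "u$2 / x$2"]) (simp add: vec2_eq)
next
  case False
  have e: "x$1 * u$2 = x$2 * u$1" using assms(1) by (simp add: det2_def)
  have "u$2 = (u$1 / x$1) * x$2" using False e
    by (simp add: eq_divide_eq) (simp add: mult.commute)
  moreover have "u$1 = (u$1 / x$1) * x$1" using False by simp
  ultimately show ?thesis by (intro exI[of _ "u$1 / x$1"]) (simp add: vec2_eq)
qed

lemma cramer:
  assumes "det2 x y \<noteq> 0"
  shows "w = (det2 w y / det2 x y) *\<^sub>R x + (det2 x w / det2 x y) *\<^sub>R y"
proof -
  let ?D = "det2 x y"
  have e1: "w$1 * ?D = det2 w y * x$1 + det2 x w * y$1" by (simp add: det2_def algebra_simps)
  have e2: "w$2 * ?D = det2 w y * x$2 + det2 x w * y$2" by (simp add: det2_def algebra_simps)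
  have "w$1 = (det2 w y * x$1 + det2 x w * y$1) / ?D" using e1 assms by (simp add: eq_divide_eq)
  moreover have "w$2 = (det2 w y * x$2 + det2 x w * y$2) / ?D" using e2 assms by (simp add: eq_divide_eq)
  ultimately show ?thesis unfolding vec2_eq by (simp add: add_divide_distrib)
qed

lemma line_span: assumes "is_line L" obtains b where "b \<noteq> 0" "L = span {b}"
proof -
  obtain B where B: "B \<subseteq> L" "independent B" "L \<subseteq> span B" "card B = dim L"
    using basis_exists[of L] by blast
  then have "card B = 1" using assms by (simp add: is_line_def)
  then obtain b where b: "B = {b}" using card_1_singletonE by blast
  have "b \<noteq> 0" using B(2) b dependent_zero by blast
  moreover have "L = span {b}" using B b assms unfolding is_line_def
    by (metis span_minimal subset_antisym)
  ultimately show ?thesis using that by blast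
qed

lemma span_line: assumes "(b::real^2) \<noteq> 0" shows "is_line (span {b})"
proof -
  have "independent {b}" using assms by (simp add: independent_insert)
  then have "dim {b} = 1" using dim_eq_card_independent by fastforce
  then show ?thesis unfolding is_line_def by (simp add: dim_span)
qed

lemma line_image: assumes "is_line L" "inj ((*v) (R::real^2^2))" shows "is_line ((*v) R ` L)"
proof -
  obtain b where b: "b \<noteq> 0" "L = span {b}" using line_span[OF assms(1)] by blast
  have "(*v) R ` L = span {R *v b}" using span_linear_image[of "(*v) R" "{b}"] b(2) by simp
  moreover have "R *v b \<noteq> 0" using b(1) assms(2)
    by (metis injD matrix_vector_mult_0_right)
  ultimately show ?thesis using span_line by simp
qed

lemma line_det0: assumes "is_line L" "x \<in> L" "u \<in> L" shows "det2 x u = 0"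
proof (rule ccontr)
  assume D: "det2 x u \<noteq> 0"
  have sL: "subspace L" using assms(1) by (simp add: is_line_def)
  have "w \<in> L" for w
    using cramer[OF D, of w] sL assms(2,3) by (metis subspace_add subspace_scale)
  then have "L = UNIV" by blast
  then have "dim L = 2" by simp
  then show False using assms(1) by (simp add: is_line_def)
qed

lemma line_nonzero: assumes "is_line L" shows "\<exists>x\<in>L. x \<noteq> 0"
  using line_span[OF assms] by (metis span_base singletonI)

lemma line_unit: assumes "is_line L" shows "\<exists>x\<in>L. norm x = 1"
proof -
  obtain x where x: "x \<in> L" "x \<noteq> 0" using line_nonzero[OF assms] by blast
  have "(1 / norm x) *\<^sub>R x \<in> L" using x(1) assms by (simp add: is_line_def subspace_scale)
  then show ?thesis using x(2) by (intro bexI) auto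
qed

lemma rp_dist_eq:
  assumes "is_line L" "is_line M" "x \<in> L" "x \<noteq> 0" "y \<in> M" "y \<noteq> 0"
  shows "rp_dist L M = \<bar>det2 x y\<bar> / (norm x * norm y)"
proof -
  define u where "u = (SOME u. u \<in> L \<and> u \<noteq> 0)"
  define v where "v = (SOME v. v \<in> M \<and> v \<noteq> 0)"
  have u: "u \<in> L" "u \<noteq> 0" unfolding u_def using someI[of "\<lambda>u. u \<in> L \<and> u \<noteq> 0" x] assms by auto
  have v: "v \<in> M" "v \<noteq> 0" unfolding v_def using someI[of "\<lambda>u. u \<in> M \<and> u \<noteq> 0" y] assms by auto
  obtain t where t: "u = t *\<^sub>R x" using det2_zero_mult[OF line_det0[OF assms(1,3) u(1)] assms(4)] by blast
  obtain r where r: "v = r *\<^sub>R y" using det2_zero_mult[OF line_det0[OF assms(2,5) v(1)] assms(6)] by blast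
  have "rp_dist L M = sqrt (1 - ((u \<bullet> v) / (norm u * norm v))\<^sup>2)"
    unfolding rp_dist_def u_def v_def Let_def by simp
  also have "\<dots> = \<bar>det2 u v\<bar> / (norm u * norm v)" using sine_formula u v by simp
  also have "\<dots> = \<bar>det2 x y\<bar> / (norm x * norm y)"
    using u(2) v(2) unfolding t r det2_scale by (simp add: abs_mult)
  finally show ?thesis .
qed


lemma cprod_add: "cprod A (a + b) i = cprod A b (i + int a) ** cprod A a i"
proof (induction b)
  case 0
  then show ?case by (simp add: matrix_mul_lid)
next
  case (Suc b)
  have "cprod A (a + Suc b) i = A (i + int (a + b)) ** cprod A (a + b) i" by simp
  also have "\<dots> = A (i + int a + int b) ** (cprod A b (i + int a) ** cprod A a i)"
    using Suc by (simp add: add.assoc)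
  also have "\<dots> = cprod A (Suc b) (i + int a) ** cprod A a i" by (simp add: matrix_mul_assoc)
  finally show ?case .
qed

lemma cprod_inv:
  assumes "\<forall>j. line_act (A j) (u j) = u (j + 1)" "x \<in> u i"
  shows "cprod A n i *v x \<in> u (i + int n)"
proof (induction n)
  case 0
  then show ?case using assms(2) by simp
next
  case (Suc n)
  have "A (i + int n) *v (cprod A n i *v x) \<in> line_act (A (i + int n)) (u (i + int n))"
    using Suc unfolding line_act_def by blast
  then have "A (i + int n) *v (cprod A n i *v x) \<in> u (i + int n + 1)"
    using assms(1) by metis
  moreover have "i + int (Suc n) = i + int n + 1" by simp
  ultimately have "A (i + int n) *v (cprod A n i *v x) \<in> u (i + int (Suc n))" by metis
  then show ?case by (simp add: matrix_vector_mul_assoc)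
qed

lemma opnorm_bound: "norm (A *v v) \<le> opnorm A * norm v"
  unfolding opnorm_def by (rule onorm) simp

lemma opnorm_nonneg: "opnorm A \<ge> 0"
  unfolding opnorm_def by (rule onorm_pos_le) simp

lemma dom_scaled:
  fixes F :: "mat2" and U S :: "(real^2) set" and \<eta> :: real
  assumes hyp: "\<forall>uv \<in> U. \<forall>sv \<in> S. norm uv = 1 \<longrightarrow> norm sv = 1 \<longrightarrow> norm (F *v uv) > \<eta> * norm (F *v sv)"
    and U: "is_line U" and S: "is_line S" and eta: "\<eta> > 0"
    and z: "z \<in> U" and w: "w \<in> S"
  shows "norm (F *v z) * norm w \<ge> \<eta> * norm (F *v w) * norm z"
    and "z \<noteq> 0 \<Longrightarrow> F *v z \<noteq> 0"
proof -
  have sU: "subspace U" and sS: "subspace S" using U S by (auto simp: is_line_def)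
  have unitz: "norm ((1 / norm z) *\<^sub>R z) = 1" and inz: "(1 / norm z) *\<^sub>R z \<in> U" if "z \<noteq> 0"
    using that z sU by (auto simp: subspace_scale)
  have unitw: "norm ((1 / norm w) *\<^sub>R w) = 1" and inw: "(1 / norm w) *\<^sub>R w \<in> S" if "w \<noteq> 0"
    using that w sS by (auto simp: subspace_scale)
  show "norm (F *v z) * norm w \<ge> \<eta> * norm (F *v w) * norm z"
  proof (cases "z = 0 \<or> w = 0")
    case True
    then show ?thesis by auto
  next
    case False
    then have zn: "z \<noteq> 0" and wn: "w \<noteq> 0" by auto
    have "norm (F *v ((1 / norm z) *\<^sub>R z)) > \<eta> * norm (F *v ((1 / norm w) *\<^sub>R w))"
      using hyp unitz[OF zn] inz[OF zn] unitw[OF wn] inw[OF wn] by blast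
    then have "norm (F *v z) / norm z > \<eta> * (norm (F *v w) / norm w)"
      by (simp add: matrix_vector_mult_scaleR divide_inverse mult.commute)
    then have "norm (F *v z) / norm z * (norm z * norm w) > \<eta> * (norm (F *v w) / norm w) * (norm z * norm w)"
      using zn wn by (intro mult_strict_right_mono) auto
    then show ?thesis using zn wn by (simp add: field_simps)
  qed
  show "F *v z \<noteq> 0" if zn: "z \<noteq> 0"
  proof -
    obtain y where y: "y \<in> S" "norm y = 1" using line_unit[OF S] by blast
    have "norm (F *v ((1 / norm z) *\<^sub>R z)) > \<eta> * norm (F *v y)"
      using hyp unitz[OF zn] inz[OF zn] y by blast
    moreover have "\<eta> * norm (F *v y) \<ge> 0" using eta by simp
    ultimately have "F *v ((1 / norm z) *\<^sub>R z) \<noteq> 0" by auto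
    then show ?thesis by (auto simp: matrix_vector_mult_scaleR)
  qed
qed

lemma cprod_step: "cprod A (Suc m * N) i = cprod A N (i + int (m * N)) ** cprod A (m * N) i"
  using cprod_add[of A "m * N" N i] by (simp add: add.commute)

lemma dom_iter:
  assumes inv_u: "\<forall>j. line_act (A j) (u j) = u (j + 1)"
    and inv_s: "\<forall>j. line_act (A j) (s j) = s (j + 1)"
    and lines: "\<forall>j. is_line (s j) \<and> is_line (u j)"
    and hyp: "\<forall>i. \<forall>uv \<in> u i. \<forall>sv \<in> s i. norm uv = 1 \<longrightarrow> norm sv = 1 \<longrightarrow>
                norm (cprod A N i *v uv) > \<eta> * norm (cprod A N i *v sv)"
    and eta: "\<eta> > 0"
    and x: "x \<in> u i" and y: "y \<in> s i"
  shows "norm (cprod A (m*N) i *v x) * norm y \<ge> \<eta>^m * norm (cprod A (m*N) i *v y) * norm x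
     \<and> (x \<noteq> 0 \<longrightarrow> cprod A (m*N) i *v x \<noteq> 0)"
proof (induction m)
  case 0
  then show ?case by simp
next
  case (Suc m)
  define j where "j = i + int (m * N)"
  define F where "F = cprod A N j"
  define Z where "Z = cprod A (m*N) i *v x"
  define W where "W = cprod A (m*N) i *v y"
  have Zu: "Z \<in> u j" unfolding Z_def j_def by (rule cprod_inv[OF inv_u x])
  have Ws: "W \<in> s j" unfolding W_def j_def by (rule cprod_inv[OF inv_s y])
  have e: "cprod A (Suc m * N) i *v v = F *v (cprod A (m*N) i *v v)" for v
    unfolding F_def j_def cprod_step by (simp add: matrix_vector_mul_assoc)
  have IH1: "norm Z * norm y \<ge> \<eta>^m * norm W * norm x" and IH2: "x \<noteq> 0 \<longrightarrow> Z \<noteq> 0"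
    using Suc unfolding Z_def W_def by auto
  have D1: "norm (F *v Z) * norm W \<ge> \<eta> * norm (F *v W) * norm Z"
    and D2: "Z \<noteq> 0 \<Longrightarrow> F *v Z \<noteq> 0"
    using dom_scaled[where F=F and U="u j" and S="s j" and \<eta>=\<eta>, OF _ _ _ eta Zu Ws] hyp lines unfolding F_def by auto
  have main: "norm (F *v Z) * norm y \<ge> \<eta>^(Suc m) * norm (F *v W) * norm x"
  proof (cases "x = 0 \<or> W = 0")
    case True
    then show ?thesis by auto
  next
    case False
    then have Wn: "norm W > 0" by simp
    have "norm (F *v Z) * norm y * norm W = (norm (F *v Z) * norm W) * norm y" by simp
    also have "\<dots> \<ge> (\<eta> * norm (F *v W) * norm Z) * norm y"
      using D1 by (intro mult_right_mono) auto
    also have "(\<eta> * norm (F *v W) * norm Z) * norm y = (\<eta> * norm (F *v W)) * (norm Z * norm y)" by simp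
    also have "\<dots> \<ge> (\<eta> * norm (F *v W)) * (\<eta>^m * norm W * norm x)"
      using IH1 eta by (intro mult_left_mono) auto
    also have "(\<eta> * norm (F *v W)) * (\<eta>^m * norm W * norm x) = (\<eta>^(Suc m) * norm (F *v W) * norm x) * norm W"
      by simp
    finally show ?thesis using Wn by simp
  qed
  show ?case using main D2 IH2 unfolding e Z_def W_def by auto
qed

lemma lower_unit:
  fixes F :: "mat2" and U S :: "(real^2) set" and \<eta> :: real
  assumes hyp: "\<forall>uv \<in> U. \<forall>sv \<in> S. norm uv = 1 \<longrightarrow> norm sv = 1 \<longrightarrow> norm (F *v uv) > \<eta> * norm (F *v sv)"
    and U: "is_line U" and S: "is_line S" and eta: "\<eta> > 1"
    and sep: "rp_dist U S > \<delta>" and dpos: "\<delta> > 0" and opn: "opnorm F \<ge> c"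
    and x: "x \<in> U" "norm x = 1"
  shows "norm (F *v x) \<ge> c * \<delta> / 2"
proof -
  obtain y where y: "y \<in> S" "norm y = 1" using line_unit[OF S] by blast
  define D where "D = det2 x y"
  have xn: "x \<noteq> 0" and yn: "y \<noteq> 0" using x y by auto
  have "rp_dist U S = \<bar>D\<bar>" using rp_dist_eq[OF U S x(1) xn y(1) yn] x y by (simp add: D_def)
  then have Dd: "\<bar>D\<bar> > \<delta>" using sep by simp
  then have Dn: "D \<noteq> 0" using dpos by auto
  have Fy: "norm (F *v y) \<le> norm (F *v x)"
  proof -
    have "norm (F *v x) > \<eta> * norm (F *v y)" using hyp x y by blast
    moreover have "\<eta> * norm (F *v y) \<ge> norm (F *v y)" using eta
      by (metis mult_le_cancel_right1 norm_ge_zero less_le_not_le)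
    ultimately show ?thesis by simp
  qed
  have coef: "\<bar>det2 w v / D\<bar> \<le> norm w / \<delta>" if "norm v = 1" for w v
  proof -
    have "\<bar>det2 w v\<bar> \<le> norm w" using det2_le[of w v] that by simp
    then have "\<bar>det2 w v\<bar> / \<bar>D\<bar> \<le> norm w / \<bar>D\<bar>" using Dn by (simp add: divide_right_mono)
    also have "\<dots> \<le> norm w / \<delta>" using Dd dpos by (intro divide_left_mono) auto
    finally show ?thesis by (simp add: abs_divide)
  qed
  have coef2: "\<bar>det2 x w / D\<bar> \<le> norm w / \<delta>" for w
  proof -
    have "det2 x w = - det2 w x" by (simp add: det2_def algebra_simps)
    then have "\<bar>det2 x w\<bar> = \<bar>det2 w x\<bar>" by simp
    then show ?thesis using coef[of x w] x by (simp add: abs_divide)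
  qed
  have bnd: "norm (F *v w) \<le> (2 * norm (F *v x) / \<delta>) * norm w" for w
  proof -
    define a where "a = det2 w y / D"
    define b where "b = det2 x w / D"
    have "w = a *\<^sub>R x + b *\<^sub>R y" unfolding a_def b_def D_def using cramer Dn D_def by blast
    then have "F *v w = a *\<^sub>R (F *v x) + b *\<^sub>R (F *v y)"
      by (metis matrix_vector_mult_scaleR matrix_vector_right_distrib)
    then have "norm (F *v w) \<le> \<bar>a\<bar> * norm (F *v x) + \<bar>b\<bar> * norm (F *v y)"
      by (metis norm_scaleR norm_triangle_ineq)
    also have "\<dots> \<le> (norm w / \<delta>) * norm (F *v x) + (norm w / \<delta>) * norm (F *v x)"
      using coef[of y w] y(2) coef2[of w] Fy dpos unfolding a_def b_def
      by (intro add_mono mult_mono) auto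
    also have "\<dots> = (2 * norm (F *v x) / \<delta>) * norm w" by simp
    finally show ?thesis .
  qed
  have "opnorm F \<le> 2 * norm (F *v x) / \<delta>" unfolding opnorm_def by (rule onorm_le) (rule bnd)
  then have "c \<le> 2 * norm (F *v x) / \<delta>" using opn by simp
  then show ?thesis using dpos by (simp add: field_simps)
qed

lemma scale_up:
  assumes U: "is_line U" and h: "\<forall>x \<in> U. norm x = 1 \<longrightarrow> norm (F *v x) \<ge> c" and z: "z \<in> U"
  shows "norm (F *v z) \<ge> c * norm z"
proof (cases "z = 0")
  case True then show ?thesis by simp
next
  case False
  have "(1 / norm z) *\<^sub>R z \<in> U" using z U by (simp add: is_line_def subspace_scale)
  moreover have "norm ((1 / norm z) *\<^sub>R z) = 1" using False by simp
  ultimately have "norm (F *v ((1 / norm z) *\<^sub>R z)) \<ge> c" using h by blast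
  then have "norm (F *v z) / norm z \<ge> c" by (simp add: matrix_vector_mult_scaleR divide_inverse mult.commute)
  then show ?thesis using False by (simp add: field_simps)
qed

lemma growth:
  assumes inv_u: "\<forall>j. line_act (A j) (u j) = u (j + 1)"
    and h: "\<forall>j. \<forall>z \<in> u j. norm (cprod A N j *v z) \<ge> c * norm z" and c: "c \<ge> 0"
    and x: "x \<in> u i"
  shows "norm (cprod A (m*N) i *v x) \<ge> c^m * norm x"
proof (induction m)
  case 0 then show ?case by simp
next
  case (Suc m)
  have Z: "cprod A (m*N) i *v x \<in> u (i + int (m*N))" by (rule cprod_inv[OF inv_u x])
  have "norm (cprod A (Suc m * N) i *v x) = norm (cprod A N (i + int (m*N)) *v (cprod A (m*N) i *v x))"
    unfolding cprod_step by (simp add: matrix_vector_mul_assoc)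
  also have "\<dots> \<ge> c * norm (cprod A (m*N) i *v x)" using h Z by blast
  finally have "norm (cprod A (Suc m * N) i *v x) \<ge> c * norm (cprod A (m*N) i *v x)" .
  moreover have "c * norm (cprod A (m*N) i *v x) \<ge> c * (c^m * norm x)"
    using Suc c by (intro mult_left_mono) auto
  ultimately show ?case by simp
qed


lemma det_lower:
  fixes R :: mat2
  assumes k: "k > 0" and b: "\<forall>v. k * norm v \<le> norm (R *v v)"
  shows "\<bar>det2 (R *v x) (R *v y)\<bar> \<ge> k\<^sup>2 * \<bar>det2 x y\<bar>"
proof (cases "x = 0")
  case True then show ?thesis by (simp add: det2_def)
next
  case False
  define a where "a = R *v x"
  have an: "norm a \<ge> k * norm x" using b a_def by blast
  moreover have "k * norm x > 0" using False k by simp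
  ultimately have a0: "a \<noteq> 0" by auto
  define t where "t = (a \<bullet> (R *v y)) / (norm a)\<^sup>2"
  define z where "z = R *v y - t *\<^sub>R a"
  have zR: "z = R *v (y - t *\<^sub>R x)" unfolding z_def a_def
    by (simp add: matrix_vector_mult_diff_distrib matrix_vector_mult_scaleR)
  have orth: "a \<bullet> z = 0"
  proof -
    have n2: "(norm a)\<^sup>2 \<noteq> 0" using a0 by simp
    have "a \<bullet> z = a \<bullet> (R *v y) - t * (a \<bullet> a)" unfolding z_def by (simp only: inner_diff_right inner_scaleR_right)
    also have "a \<bullet> a = (norm a)\<^sup>2" by (simp only: power2_norm_eq_inner)
    finally show ?thesis unfolding t_def using n2 by simp
  qed
  have dz: "det2 a z = det2 a (R *v y)" unfolding z_def by (simp add: det2_def algebra_simps)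
  have dxy: "det2 x (y - t *\<^sub>R x) = det2 x y" by (simp add: det2_def algebra_simps)
  have "(det2 a z)\<^sup>2 = (norm a * norm z)\<^sup>2" using lagrange[of a z] orth by (simp add: power_mult_distrib)
  then have e: "\<bar>det2 a z\<bar> = norm a * norm z"
  proof -
    have "sqrt ((det2 a z)\<^sup>2) = sqrt ((norm a * norm z)\<^sup>2)" using \<open>(det2 a z)\<^sup>2 = (norm a * norm z)\<^sup>2\<close> by simp
    then show ?thesis by simp
  qed
  have zn: "norm z \<ge> k * norm (y - t *\<^sub>R x)" using b zR by blast
  have "k\<^sup>2 * \<bar>det2 x y\<bar> \<le> k\<^sup>2 * (norm x * norm (y - t *\<^sub>R x))"
    using det2_le[of x "y - t *\<^sub>R x"] dxy by (intro mult_left_mono) auto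
  also have "\<dots> = (k * norm x) * (k * norm (y - t *\<^sub>R x))" by (simp add: power2_eq_square)
  also have "\<dots> \<le> norm a * norm z" using an zn k by (intro mult_mono) auto
  also have "\<dots> = \<bar>det2 (R *v x) (R *v y)\<bar>" using e dz a_def by simp
  finally show ?thesis .
qed

lemma ds_transfer:
  fixes A A' R Rinv :: "int \<Rightarrow> mat2" and k K :: real
  assumes DS: "dominated_splitting A"
    and inv1: "\<forall>i. Rinv i ** R i = mat 1" and inv2: "\<forall>i. R i ** Rinv i = mat 1"
    and k: "k > 0"
    and bnds: "\<forall>i v. k * norm v \<le> norm (R i *v v) \<and> norm (R i *v v) \<le> K * norm v"
    and conj: "\<forall>i. A' i = R (i + 1) ** A i ** Rinv i"
  shows "dominated_splitting A'"
proof -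
  obtain M where M: "\<forall>i. opnorm (A i) \<le> M" using DS unfolding dominated_splitting_def by blast
  obtain s u :: "int \<Rightarrow> (real^2) set" and N :: nat and \<eta> \<delta> :: real where
    lines: "\<forall>i. is_line (s i) \<and> is_line (u i)"
    and invar: "\<forall>i. line_act (A i) (u i) = u (i + 1) \<and> line_act (A i) (s i) = s (i + 1)"
    and N: "N \<ge> 1" and eta: "\<eta> > 1"
    and hyp: "\<forall>i. \<forall>uv \<in> u i. \<forall>sv \<in> s i. norm uv = 1 \<longrightarrow> norm sv = 1 \<longrightarrow>
                norm (cprod A N i *v uv) > \<eta> * norm (cprod A N i *v sv)"
    and dpos: "\<delta> > 0" and sep: "\<forall>i. rp_dist (u i) (s i) > \<delta>"
    and inf: "(INF i. opnorm (cprod A N i)) > 0"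
    using DS unfolding dominated_splitting_def by blast
  have inv_u: "\<forall>j. line_act (A j) (u j) = u (j + 1)" and inv_s: "\<forall>j. line_act (A j) (s j) = s (j + 1)"
    using invar by auto
  have RiR: "Rinv i *v (R i *v x) = x" for i x using inv1 by (simp add: matrix_vector_mul_assoc)
  have RRi: "R i *v (Rinv i *v x) = x" for i x using inv2 by (simp add: matrix_vector_mul_assoc)
  have lo: "k * norm v \<le> norm (R i *v v)" and hi: "norm (R i *v v) \<le> K * norm v" for i v
    using bnds by auto
  obtain e0 where e0: "e0 \<in> u 0" "norm e0 = 1" using line_unit lines by blast
  have kK: "k \<le> K" using lo[of e0 0] hi[of 0 e0] e0 by simp
  then have Kpos: "K > 0" using k by simp
  have Rinv_bnd: "norm (Rinv i *v v) \<le> norm v / k" for i v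
    using lo[of "Rinv i *v v" i] RRi[of i v] k by (simp add: field_simps mult.commute)
  have injR: "inj ((*v) (R i))" for i by (metis RiR injI)
  have A'v: "A' j *v w = R (j+1) *v (A j *v (Rinv j *v w))" for j w
    using conj by (simp add: matrix_vector_mul_assoc matrix_mul_assoc)
  have cp: "cprod A' n i *v v = R (i + int n) *v (cprod A n i *v (Rinv i *v v))" for n i v
  proof (induction n arbitrary: v)
    case 0 then show ?case by (simp add: RRi)
  next
    case (Suc n)
    have "cprod A' (Suc n) i *v v = A' (i + int n) *v (cprod A' n i *v v)"
      by (simp add: matrix_vector_mul_assoc)
    also have "\<dots> = R (i + int n + 1) *v (A (i + int n) *v (Rinv (i + int n) *v (R (i + int n) *v (cprod A n i *v (Rinv i *v v)))))"
      by (simp only: A'v Suc.IH)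
    also have "\<dots> = R (i + int (Suc n)) *v (cprod A (Suc n) i *v (Rinv i *v v))"
    proof -
      have e1: "cprod A (Suc n) i *v w = A (i + int n) *v (cprod A n i *v w)" for w
        by (simp add: matrix_vector_mul_assoc)
      have e2: "i + int (Suc n) = i + int n + 1" by simp
      show ?thesis by (simp only: RiR e1 e2)
    qed
    finally show ?case .
  qed
  have cpR: "cprod A' n i *v (R i *v x) = R (i + int n) *v (cprod A n i *v x)" for n i x
    using cp RiR by simp
  define u' where "u' i = (*v) (R i) ` u i" for i
  define s' where "s' i = (*v) (R i) ` s i" for i
  have M0: "M \<ge> 0" using M opnorm_nonneg order_trans by blast
  have bdd: "\<forall>i. opnorm (A' i) \<le> K * M / k"
  proof
    fix i
    show "opnorm (A' i) \<le> K * M / k" unfolding opnorm_def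
    proof (rule onorm_le)
      fix v
      have "norm (A' i *v v) = norm (R (i+1) *v (A i *v (Rinv i *v v)))"
        by (simp only: A'v)
      also have "\<dots> \<le> K * norm (A i *v (Rinv i *v v))" by (rule hi)
      also have "\<dots> \<le> K * (M * norm (Rinv i *v v))"
      proof -
        have "opnorm (A i) * norm (Rinv i *v v) \<le> M * norm (Rinv i *v v)"
          using M by (intro mult_right_mono) auto
        then show ?thesis using opnorm_bound[of "A i" "Rinv i *v v"] Kpos
          by (intro mult_left_mono) auto
      qed
      also have "\<dots> \<le> K * (M * (norm v / k))"
        using Rinv_bnd Kpos M0 by (intro mult_left_mono) auto
      also have "\<dots> = K * M / k * norm v" by simp
      finally show "norm (A' i *v v) \<le> K * M / k * norm v" .
    qed
  qed
  have lines': "\<forall>i. is_line (s' i) \<and> is_line (u' i)"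
    unfolding u'_def s'_def using lines line_image injR by blast
  have act: "line_act (A' i) ((*v) (R i) ` L) = (*v) (R (i+1)) ` line_act (A i) L" for i L
  proof -
    have "(\<lambda>v. A' i *v v) \<circ> (*v) (R i) = (*v) (R (i+1)) \<circ> (\<lambda>v. A i *v v)"
      using conj by (auto simp: matrix_vector_mul_assoc[symmetric] RiR)
    then show ?thesis unfolding line_act_def by (simp add: image_comp)
  qed
  have invar': "\<forall>i. line_act (A' i) (u' i) = u' (i + 1) \<and> line_act (A' i) (s' i) = s' (i + 1)"
    unfolding u'_def s'_def using act invar by simp
  obtain m0 where m0: "4 * K\<^sup>2 / k\<^sup>2 < \<eta> ^ m0" using real_arch_pow[OF eta] by blast
  define m where "m = Suc m0"
  have etam: "\<eta> ^ m * k\<^sup>2 \<ge> 4 * K\<^sup>2"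
  proof -
    have "\<eta> ^ m0 \<le> \<eta> ^ m" unfolding m_def using eta by (intro power_increasing) auto
    then have "4 * K\<^sup>2 / k\<^sup>2 \<le> \<eta> ^ m" using m0 by simp
    then show ?thesis using k by (simp add: field_simps)
  qed
  define n where "n = m * N"
  have n1: "n \<ge> 1" unfolding n_def m_def using N by simp
  have dom': "\<forall>i. \<forall>uv \<in> u' i. \<forall>sv \<in> s' i. norm uv = 1 \<longrightarrow> norm sv = 1 \<longrightarrow>
                norm (cprod A' n i *v uv) > 2 * norm (cprod A' n i *v sv)"
  proof (intro allI ballI impI)
    fix i uv sv assume uv: "uv \<in> u' i" and sv: "sv \<in> s' i" and nu: "norm uv = 1" and ns: "norm sv = 1"
    obtain x where x: "x \<in> u i" "uv = R i *v x" using uv unfolding u'_def by blast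
    obtain y where y: "y \<in> s i" "sv = R i *v y" using sv unfolding s'_def by blast
    have X: "K * norm x \<ge> 1" using hi[of i x] x nu by simp
    have Y: "k * norm y \<le> 1" using lo[of y i] y ns by simp
    have xn: "x \<noteq> 0" using x nu by auto
    have D: "norm (cprod A n i *v x) * norm y \<ge> \<eta>^m * norm (cprod A n i *v y) * norm x"
      and nz: "cprod A n i *v x \<noteq> 0"
      using dom_iter[OF inv_u inv_s lines hyp _ x(1) y(1), of m] eta xn unfolding n_def by auto
    define a where "a = norm (cprod A n i *v x)"
    define b where "b = norm (cprod A n i *v y)"
    have a0: "a > 0" using nz a_def by simp
    have b0: "b \<ge> 0" using b_def by simp
    have "a \<ge> a * (k * norm y)" using Y a0 by (simp add: mult_left_le)
    also have "a * (k * norm y) = k * (a * norm y)" by simp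
    also have "\<dots> \<ge> k * (\<eta>^m * b * norm x)" using D k unfolding a_def b_def by (intro mult_left_mono) auto
    finally have "a * K \<ge> k * (\<eta>^m * b * norm x) * K" using Kpos by (intro mult_right_mono) auto
    also have "k * (\<eta>^m * b * norm x) * K = k * \<eta>^m * b * (K * norm x)" by simp
    also have "\<dots> \<ge> k * \<eta>^m * b" using X k b0 eta
      by (metis mult_le_cancel_left1 mult_nonneg_nonneg order_less_imp_le zero_le_power less_le_trans zero_less_one)
    finally have ak: "a * K \<ge> k * \<eta>^m * b" .
    have up: "norm (cprod A' n i *v uv) \<ge> k * a" using cpR lo x a_def by metis
    have dn: "norm (cprod A' n i *v sv) \<le> K * b" using cpR hi y b_def by metis
    have "k * a * K \<ge> k * (k * \<eta>^m * b)" using ak k by (simp add: mult.assoc mult_left_mono mult.commute)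
    also have "k * (k * \<eta>^m * b) = (\<eta>^m * k\<^sup>2) * b" by (simp add: power2_eq_square)
    also have "\<dots> \<ge> 4 * K\<^sup>2 * b" using etam b0 by (intro mult_right_mono) auto
    finally have "k * a * K \<ge> (4 * K * b) * K" by (simp add: power2_eq_square mult.assoc mult.commute mult.left_commute)
    then have ka: "k * a \<ge> 4 * (K * b)" using Kpos by (simp add: mult.commute mult.left_commute)
    have "k * a > 0" using k a0 by simp
    then show "norm (cprod A' n i *v uv) > 2 * norm (cprod A' n i *v sv)"
      using up dn ka norm_ge_zero[of "cprod A' n i *v sv"] by linarith
  qed
  define \<delta>' where "\<delta>' = \<delta> * k\<^sup>2 / K\<^sup>2"
  have dpos': "\<delta>' > 0" unfolding \<delta>'_def using dpos k Kpos by simp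
  have sep': "\<forall>i. rp_dist (u' i) (s' i) > \<delta>'"
  proof
    fix i
    obtain x where x: "x \<in> u i" "norm x = 1" using line_unit lines by blast
    obtain y where y: "y \<in> s i" "norm y = 1" using line_unit lines by blast
    have xn: "x \<noteq> 0" and yn: "y \<noteq> 0" using x y by auto
    have Rxn: "R i *v x \<noteq> 0" and Ryn: "R i *v y \<noteq> 0" using injR xn yn
      by (metis injD matrix_vector_mult_0_right)+
    have "rp_dist (u i) (s i) = \<bar>det2 x y\<bar>" using rp_dist_eq[of "u i" "s i" x y] lines x y xn yn by simp
    then have dd: "\<bar>det2 x y\<bar> > \<delta>" using sep[rule_format, of i] by linarith
    have r: "rp_dist (u' i) (s' i) = \<bar>det2 (R i *v x) (R i *v y)\<bar> / (norm (R i *v x) * norm (R i *v y))"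
      using rp_dist_eq[of "u' i" "s' i" "R i *v x" "R i *v y"] lines' x y Rxn Ryn unfolding u'_def s'_def by blast
    have num: "\<bar>det2 (R i *v x) (R i *v y)\<bar> \<ge> k\<^sup>2 * \<bar>det2 x y\<bar>"
      using det_lower[OF k] lo by blast
    have den: "norm (R i *v x) * norm (R i *v y) \<le> K\<^sup>2"
    proof -
      have "norm (R i *v x) * norm (R i *v y) \<le> K * K"
        using hi[of i x] hi[of i y] x y Kpos by (intro mult_mono) auto
      then show ?thesis by (simp add: power2_eq_square)
    qed
    have denp: "norm (R i *v x) * norm (R i *v y) > 0" using Rxn Ryn by simp
    have "\<delta>' < k\<^sup>2 * \<bar>det2 x y\<bar> / K\<^sup>2" unfolding \<delta>'_def using dd k Kpos
      by (simp add: divide_strict_right_mono mult.commute)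
    also have "\<dots> \<le> \<bar>det2 (R i *v x) (R i *v y)\<bar> / K\<^sup>2" using num Kpos by (simp add: divide_right_mono)
    also have "\<dots> \<le> \<bar>det2 (R i *v x) (R i *v y)\<bar> / (norm (R i *v x) * norm (R i *v y))"
      using den denp Kpos by (intro divide_left_mono) auto
    finally show "rp_dist (u' i) (s' i) > \<delta>'" using r by simp
  qed
  define c0 where "c0 = (INF i. opnorm (cprod A N i))"
  have c0le: "opnorm (cprod A N j) \<ge> c0" for j unfolding c0_def
    by (rule cINF_lower) (auto intro: bdd_belowI[of _ 0] simp: opnorm_nonneg)
  define c1 where "c1 = c0 * \<delta> / 2"
  have c1pos: "c1 > 0" unfolding c1_def using inf dpos c0_def by simp
  have lu: "\<forall>x \<in> u j. norm x = 1 \<longrightarrow> norm (cprod A N j *v x) \<ge> c1" for j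
    unfolding c1_def using lower_unit[where F="cprod A N j" and U="u j" and S="s j" and \<eta>=\<eta> and \<delta>=\<delta> and c=c0] hyp lines eta sep dpos c0le by blast
  have la: "\<forall>j. \<forall>z \<in> u j. norm (cprod A N j *v z) \<ge> c1 * norm z"
    using scale_up lu lines by blast
  have inf': "(INF i. opnorm (cprod A' n i)) > 0"
  proof -
    have "opnorm (cprod A' n i) \<ge> k * c1^m / K" for i
    proof -
      obtain x where x: "x \<in> u i" "norm x = 1" using line_unit lines by blast
      have g: "norm (cprod A n i *v x) \<ge> c1^m" using growth[OF inv_u la _ x(1), of m] c1pos x unfolding n_def by simp
      have "k * c1^m \<le> k * norm (cprod A n i *v x)" using g k by simp
      also have "\<dots> \<le> norm (cprod A' n i *v (R i *v x))" using cpR[of n i x] lo[of "cprod A n i *v x" "i + int n"] by simp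
      also have "\<dots> \<le> opnorm (cprod A' n i) * norm (R i *v x)" by (rule opnorm_bound)
      also have "\<dots> \<le> opnorm (cprod A' n i) * K" using hi[of i x] x opnorm_nonneg by (simp add: mult_left_mono)
      finally show ?thesis using Kpos by (simp add: field_simps)
    qed
    then have "(INF i. opnorm (cprod A' n i)) \<ge> k * c1^m / K" by (intro cINF_greatest) auto
    moreover have "k * c1^m / K > 0" using k c1pos Kpos by simp
    ultimately show ?thesis by linarith
  qed
  show ?thesis unfolding dominated_splitting_def
    apply (intro conjI)
    subgoal using bdd by blast
    apply (rule exI[of _ s'], rule exI[of _ u'])
    apply (intro conjI)
    subgoal using lines' by blast
    subgoal using invar' by blast
    apply (rule exI[of _ n], intro conjI)
    subgoal using n1 .
    subgoal using dom' by (intro exI[of _ 2]) auto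
    subgoal using dpos' sep' by blast
    subgoal using inf' .
    done
qed


lemma quad_nonneg:
  fixes p r b x y :: real
  assumes "p \<ge> 0" "r \<ge> 0" "p * r = b\<^sup>2"
  shows "p * x\<^sup>2 + 2 * b * x * y + r * y\<^sup>2 \<ge> 0"
proof (cases "p = 0")
  case True
  then have "b = 0" using assms by simp
  then show ?thesis using True assms by simp
next
  case False
  then have pp: "p > 0" using assms by simp
  have "p * (p * x\<^sup>2 + 2 * b * x * y + r * y\<^sup>2) = (p * x + b * y)\<^sup>2"
    using assms(3) by (simp add: power2_eq_square algebra_simps)
  then have "p * (p * x\<^sup>2 + 2 * b * x * y + r * y\<^sup>2) \<ge> 0" by simp
  then show ?thesis using pp by (simp add: zero_le_mult_iff)
qed

lemma pr_nonneg:
  fixes p r b :: real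
  assumes "p * r = b\<^sup>2" "p + r \<ge> 0"
  shows "p \<ge> 0 \<and> r \<ge> 0"
proof (rule ccontr)
  assume "\<not> ?thesis"
  then have "p < 0 \<or> r < 0" by auto
  then show False
  proof
    assume p: "p < 0"
    then have "r > 0" using assms(2) by simp
    then have "p * r < 0" using p by (simp add: mult_neg_pos)
    then show False using assms(1) by (metis zero_le_power2 not_le)
  next
    assume r: "r < 0"
    then have "p > 0" using assms(2) by simp
    then have "p * r < 0" using r by (simp add: mult_pos_neg)
    then show False using assms(1) by (metis zero_le_power2 not_le)
  qed
qed

lemma sv_bounds:
  fixes Q :: mat2
  assumes h1: "C1 > sigma1 Q" and h2: "sigma1 Q \<ge> sigma2 Q" and h3: "sigma2 Q > C2" and c2: "C2 > 0"
  shows "C2 * norm v \<le> norm (Q *v v) \<and> norm (Q *v v) \<le> C1 * norm v"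
proof -
  define a where "a = (Q$1$1)\<^sup>2 + (Q$2$1)\<^sup>2"
  define b where "b = Q$1$1 * Q$1$2 + Q$2$1 * Q$2$2"
  define c where "c = (Q$1$2)\<^sup>2 + (Q$2$2)\<^sup>2"
  define D where "D = (a - c)\<^sup>2 + 4 * b\<^sup>2"
  define lp where "lp = (a + c + sqrt D) / 2"
  define lm where "lm = (a + c - sqrt D) / 2"
  have D0: "D \<ge> 0" unfolding D_def by simp
  have sD: "(sqrt D)\<^sup>2 = D" using D0 by simp
  have S: "(transpose Q ** Q) *v w = (\<chi> i. if i = 1 then a * w$1 + b * w$2 else b * w$1 + c * w$2)" for w
    unfolding vec2_eq by (simp add: matrix_vector_mult_def matrix_matrix_mult_def transpose_def sum_2
        a_def b_def c_def power2_eq_square algebra_simps)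
  have char: "(a - l) * (c - l) = b\<^sup>2" if "l = lp \<or> l = lm" for l
  proof -
    have "2*l - (a + c) = sqrt D \<or> 2*l - (a + c) = - sqrt D" using that unfolding lp_def lm_def by auto
    then have "(2*l - (a + c))\<^sup>2 = (sqrt D)\<^sup>2" by auto
    then have "(2*l - (a + c))\<^sup>2 = D" using sD by simp
    then show ?thesis unfolding D_def by (simp add: power2_eq_square algebra_simps)
  qed
  let ?E = "sing_eigs Q"
  have sub: "?E \<subseteq> {lp, lm}"
  proof
    fix e assume "e \<in> ?E"
    then obtain w where w: "w \<noteq> 0" "(transpose Q ** Q) *v w = e *\<^sub>R w" unfolding sing_eigs_def by blast
    have e1: "(a - e) * w$1 + b * w$2 = 0" and e2: "b * w$1 + (c - e) * w$2 = 0"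
      using w(2) unfolding S vec2_eq by (simp_all add: algebra_simps)
    have "((a - e) * (c - e) - b\<^sup>2) * w$1 = 0"
    proof -
      have "((a - e) * (c - e) - b\<^sup>2) * w$1 = (c - e) * ((a - e) * w$1 + b * w$2) - b * (b * w$1 + (c - e) * w$2)"
        by (simp add: power2_eq_square algebra_simps)
      then show ?thesis using e1 e2 by simp
    qed
    moreover have "((a - e) * (c - e) - b\<^sup>2) * w$2 = 0"
    proof -
      have "((a - e) * (c - e) - b\<^sup>2) * w$2 = (a - e) * (b * w$1 + (c - e) * w$2) - b * ((a - e) * w$1 + b * w$2)"
        by (simp add: power2_eq_square algebra_simps)
      then show ?thesis using e1 e2 by simp
    qed
    ultimately have q: "(a - e) * (c - e) - b\<^sup>2 = 0" using w(1) unfolding vec2_eq by auto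
    then have "(2*e - (a + c))\<^sup>2 = (sqrt D)\<^sup>2" using sD unfolding D_def by (simp add: power2_eq_square algebra_simps)
    then have "2*e - (a + c) = sqrt D \<or> 2*e - (a + c) = - sqrt D" by (simp add: power2_eq_iff)
    then show "e \<in> {lp, lm}" unfolding lp_def lm_def by auto
  qed
  have mem: "l \<in> ?E" if "l = lp \<or> l = lm" for l
  proof -
    have ch: "(a - l) * (c - l) = b\<^sup>2" using char that .
    show ?thesis
    proof (cases "b = 0 \<and> l = a")
      case True
      define w :: "real^2" where "w = (\<chi> i. if i = 1 then 1 else 0)"
      have "w \<noteq> 0" unfolding w_def vec2_eq by simp
      moreover have "(transpose Q ** Q) *v w = l *\<^sub>R w" unfolding S w_def vec2_eq using True by simp
      ultimately show ?thesis unfolding sing_eigs_def by blast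
    next
      case False
      define w :: "real^2" where "w = (\<chi> i. if i = 1 then b else l - a)"
      have "w \<noteq> 0" unfolding w_def vec2_eq using False by auto
      moreover have "(transpose Q ** Q) *v w = l *\<^sub>R w" unfolding S w_def vec2_eq
        using ch by (simp add: power2_eq_square algebra_simps)
      ultimately show ?thesis unfolding sing_eigs_def by blast
    qed
  qed
  have fin: "finite ?E" using sub finite_subset by blast
  have "Max ?E \<ge> lp" using mem fin by (intro Max_ge) auto
  then have "sqrt lp \<le> sigma1 Q" unfolding sigma1_def by simp
  then have slp: "sqrt lp < C1" using h1 by simp
  have "Min ?E \<le> lm" using mem fin by (intro Min_le) auto
  then have "sqrt lm \<ge> sigma2 Q" unfolding sigma2_def by simp
  then have slm: "sqrt lm > C2" using h3 by simp
  have C1p: "C1 > 0" using h1 h2 h3 c2 by simp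
  have a0: "a \<ge> 0" and c0: "c \<ge> 0" unfolding a_def c_def by simp_all
  have lp0: "lp \<ge> 0" unfolding lp_def using a0 c0 D0 by simp
  have lm0: "lm > 0" using slm c2 by (metis less_trans real_sqrt_gt_zero real_sqrt_le_0_iff linorder_not_le)
  have lpC: "lp \<le> C1\<^sup>2"
  proof -
    have "(sqrt lp)\<^sup>2 \<le> C1\<^sup>2" using slp lp0 by (intro power_mono) auto
    then show ?thesis using lp0 by simp
  qed
  have lmC: "lm \<ge> C2\<^sup>2"
  proof -
    have "C2\<^sup>2 \<le> (sqrt lm)\<^sup>2" using slm c2 by (intro power_mono) auto
    then show ?thesis using lm0 by simp
  qed
  have nQ: "(norm (Q *v v))\<^sup>2 = a * (v$1)\<^sup>2 + 2 * b * v$1 * v$2 + c * (v$2)\<^sup>2"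
    unfolding norm2_sq mv2 a_def b_def c_def by (simp add: power2_eq_square algebra_simps)
  have nv: "(norm v)\<^sup>2 = (v$1)\<^sup>2 + (v$2)\<^sup>2" by (rule norm2_sq)
  have up: "(norm (Q *v v))\<^sup>2 \<le> lp * (norm v)\<^sup>2"
  proof -
    have ch: "(lp - a) * (lp - c) = b\<^sup>2" using char[of lp] by (simp add: algebra_simps)
    have sum: "(lp - a) + (lp - c) \<ge> 0" unfolding lp_def using D0 by simp
    have nn: "lp - a \<ge> 0 \<and> lp - c \<ge> 0"
      using pr_nonneg[OF ch sum] .
    have "(lp - a) * (v$1)\<^sup>2 + 2 * (- b) * v$1 * v$2 + (lp - c) * (v$2)\<^sup>2 \<ge> 0"
      using quad_nonneg[of "lp - a" "lp - c" "- b"] nn ch by simp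
    then show ?thesis unfolding nQ nv by (simp add: algebra_simps)
  qed
  have dn: "(norm (Q *v v))\<^sup>2 \<ge> lm * (norm v)\<^sup>2"
  proof -
    have ch: "(a - lm) * (c - lm) = b\<^sup>2" using char[of lm] by simp
    have sum: "(a - lm) + (c - lm) \<ge> 0" unfolding lm_def using D0 by simp
    have nn: "a - lm \<ge> 0 \<and> c - lm \<ge> 0"
      using pr_nonneg[OF ch sum] .
    have "(a - lm) * (v$1)\<^sup>2 + 2 * b * v$1 * v$2 + (c - lm) * (v$2)\<^sup>2 \<ge> 0"
      using quad_nonneg[of "a - lm" "c - lm" b] nn ch by simp
    then show ?thesis unfolding nQ nv by (simp add: algebra_simps)
  qed
  have "(norm (Q *v v))\<^sup>2 \<le> (C1 * norm v)\<^sup>2"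
  proof -
    have "lp * (norm v)\<^sup>2 \<le> C1\<^sup>2 * (norm v)\<^sup>2" using lpC by (intro mult_right_mono) auto
    then show ?thesis using up by (simp add: power_mult_distrib)
  qed
  moreover have "0 \<le> C1 * norm v" using C1p by simp
  ultimately have U: "norm (Q *v v) \<le> C1 * norm v" by (rule power2_le_imp_le)
  have "(C2 * norm v)\<^sup>2 \<le> (norm (Q *v v))\<^sup>2"
  proof -
    have "C2\<^sup>2 * (norm v)\<^sup>2 \<le> lm * (norm v)\<^sup>2" using lmC by (intro mult_right_mono) auto
    then show ?thesis using dn by (simp add: power_mult_distrib)
  qed
  then have L: "C2 * norm v \<le> norm (Q *v v)" by (rule power2_le_imp_le) simp
  show ?thesis using U L by simp
qed


lemma minv: assumes "invertible (A::mat2)" shows "A ** matrix_inv A = mat 1" "matrix_inv A ** A = mat 1"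
proof -
  have "\<exists>A'. A ** A' = mat 1 \<and> A' ** A = mat 1" using assms unfolding invertible_def by blast
  then have "A ** matrix_inv A = mat 1 \<and> matrix_inv A ** A = mat 1"
    unfolding matrix_inv_def by (rule someI_ex)
  then show "A ** matrix_inv A = mat 1" "matrix_inv A ** A = mat 1" by auto
qed

theorem lemma3p13:
  fixes P T Q :: "int \<Rightarrow> real^2^2" and C1 C2 :: real
  assumes "GL2_cocycle P" and "GL2_cocycle T" and "GL2_cocycle Q"
    and "\<forall>i. P i = Q (i + 1) ** T i ** matrix_inv (Q i)"
    and "\<forall>i. C1 > sigma1 (Q i) \<and> sigma1 (Q i) \<ge> sigma2 (Q i) \<and> sigma2 (Q i) > C2"
    and "C2 > 0"
  shows "dominated_splitting P \<longleftrightarrow> dominated_splitting T"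
proof -
  have inv: "invertible (Q i)" for i using assms(3) unfolding GL2_cocycle_def by blast
  have QQi: "Q i ** matrix_inv (Q i) = mat 1" and QiQ: "matrix_inv (Q i) ** Q i = mat 1" for i
    using minv[OF inv] by auto
  have bnd: "C2 * norm v \<le> norm (Q i *v v) \<and> norm (Q i *v v) \<le> C1 * norm v" for i v
    using sv_bounds assms(5,6) by blast
  have C1p: "C1 > 0" using assms(5,6) by (meson less_le_trans less_trans)
  have ibnd: "(1/C1) * norm v \<le> norm (matrix_inv (Q i) *v v) \<and> norm (matrix_inv (Q i) *v v) \<le> (1/C2) * norm v" for i v
  proof -
    have e: "Q i *v (matrix_inv (Q i) *v v) = v" using QQi by (simp add: matrix_vector_mul_assoc)
    have "norm v \<le> C1 * norm (matrix_inv (Q i) *v v)" using bnd[of "matrix_inv (Q i) *v v" i] e by simp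
    moreover have "C2 * norm (matrix_inv (Q i) *v v) \<le> norm v" using bnd[of "matrix_inv (Q i) *v v" i] e by simp
    ultimately show ?thesis using C1p assms(6) by (simp add: field_simps)
  qed
  have TP: "T i = matrix_inv (Q (i + 1)) ** P i ** Q i" for i
  proof -
    have "matrix_inv (Q (i + 1)) ** P i ** Q i
        = (matrix_inv (Q (i + 1)) ** Q (i + 1)) ** T i ** (matrix_inv (Q i) ** Q i)"
      using assms(4) by (simp add: matrix_mul_assoc)
    also have "\<dots> = T i" using QiQ by (simp add: matrix_mul_lid matrix_mul_rid)
    finally show ?thesis by simp
  qed
  show ?thesis
  proof
    assume "dominated_splitting P"
    then show "dominated_splitting T"
      by (rule ds_transfer[where R="\<lambda>i. matrix_inv (Q i)" and Rinv=Q and k="1/C1" and K="1/C2"])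
         (use QQi QiQ C1p ibnd TP in auto)
  next
    assume "dominated_splitting T"
    then show "dominated_splitting P"
      by (rule ds_transfer[where R=Q and Rinv="\<lambda>i. matrix_inv (Q i)" and k=C2 and K=C1])
         (use QQi QiQ assms(4,6) bnd in auto)
  qed
qed

end
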